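(* Let $\delta_x,\delta_t>0$, let $T_x,T_t$ be the shift operators $T_xf(x,t)=f(x+\delta_x,t)$, $T_tf(x,t)=f(x,t+\delta_t)$, and let $\Delta_x=(T_x-1)/\delta_x$, $\Delta_t=(T_t-1)/\delta_t$. Consider the discrete heat equation $$\Delta_t\phi-(\Delta_x)^2\phi=0,$$ and the discrete Burgers equation for $u(x,t)$, $$\Delta_t u=\frac{1+\delta_x u}{1+\delta_t v}\,\Delta_x v,\qquad v=\Delta_x u+u\,T_xu,$$ which are related by the discrete Cole–Hopf transformation $\Delta_x\phi=u\phi$ (so that $\Delta_t\phi=v\phi$). Let $S$ be a linear operator (a finite combination of products of powers of $T_x^{\pm1},T_t^{\pm1}$ with coefficients depending on $x,t$) such that the flow $\phi_\lambda=S\phi$ is a symmetry (commuting flow) of the discrete heat equation. Then the same operator $S$ yields a symmetry of the discrete Burgers equation whose flow is $$u_\lambda=(1+\delta_x u)\,\Delta_x\!\Big(\frac{S\phi}{\phi}\Big),$$ where $S\phi/\phi$ can be expressed in terms of $u(x,t)$ and its shifted values alone.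
   Context: A symmetry (commuting flow) of a difference equation on the fixed lattice is an evolution $\partial w/\partial\lambda=Q$ in an auxiliary parameter $\lambda$ compatible with the equation, i.e. taking solutions to solutions; $\phi_\lambda$, $u_\lambda$ denote $\partial\phi/\partial\lambda$, $\partial u/\partial\lambda$. Here $\phi$ is assumed nonvanishing so that $u=\Delta_x\phi/\phi$ is defined. *)

theory Defs
  imports Complex_Main
begin

text \<open>Functions on the plane are curried: f x t. Shift operators
  T_x f x t = f (x + dx) t and T_t f x t = f x (t + dt).\<close>

definition Dx :: "real \<Rightarrow> (real \<Rightarrow> real \<Rightarrow> real) \<Rightarrow> real \<Rightarrow> real \<Rightarrow> real" where
  "Dx dx f x t = (f (x + dx) t - f x t) / dx"

definition Dt :: "real \<Rightarrow> (real \<Rightarrow> real \<Rightarrow> real) \<Rightarrow> real \<Rightarrow> real \<Rightarrow> real" where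
  "Dt dt f x t = (f x (t + dt) - f x t) / dt"

definition heat :: "real \<Rightarrow> real \<Rightarrow> (real \<Rightarrow> real \<Rightarrow> real) \<Rightarrow> real \<Rightarrow> real \<Rightarrow> real" where
  "heat dx dt \<phi> x t = Dt dt \<phi> x t - Dx dx (Dx dx \<phi>) x t"

definition burgers_v :: "real \<Rightarrow> (real \<Rightarrow> real \<Rightarrow> real) \<Rightarrow> real \<Rightarrow> real \<Rightarrow> real" where
  "burgers_v dx u x t = Dx dx u x t + u x t * u (x + dx) t"

definition burgers :: "real \<Rightarrow> real \<Rightarrow> (real \<Rightarrow> real \<Rightarrow> real) \<Rightarrow> real \<Rightarrow> real \<Rightarrow> real" where
  "burgers dx dt u x t =
     Dt dt u x t - (1 + dx * u x t) / (1 + dt * burgers_v dx u x t) * Dx dx (burgers_v dx u) x t"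

text \<open>Natural domain of the Burgers equation (denominators nonzero; these are
  exactly T_x phi / phi and T_t phi / phi under Cole--Hopf).\<close>
definition burgers_dom :: "real \<Rightarrow> real \<Rightarrow> (real \<Rightarrow> real \<Rightarrow> real) \<Rightarrow> bool" where
  "burgers_dom dx dt u \<longleftrightarrow>
     (\<forall>x t. 1 + dx * u x t \<noteq> 0 \<and> 1 + dt * burgers_v dx u x t \<noteq> 0)"

definition cole_hopf :: "real \<Rightarrow> (real \<Rightarrow> real \<Rightarrow> real) \<Rightarrow> real \<Rightarrow> real \<Rightarrow> real" where
  "cole_hopf dx \<phi> x t = Dx dx \<phi> x t / \<phi> x t"

definition lin_op :: "real \<Rightarrow> real \<Rightarrow> (int \<times> int) set \<Rightarrow> (int \<times> int \<Rightarrow> real \<Rightarrow> real \<Rightarrow> real)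
     \<Rightarrow> (real \<Rightarrow> real \<Rightarrow> real) \<Rightarrow> real \<Rightarrow> real \<Rightarrow> real" where
  "lin_op dx dt F c \<phi> x t =
     (\<Sum>(i, j)\<in>F. c (i, j) x t * \<phi> (x + of_int i * dx) (t + of_int j * dt))"

text \<open>Telescoping product g(s) g(s+h) ... g(s+(i-1)h) for i \<ge> 0 and
  1/(g(s-h) ... g(s-|i| h)) for i < 0: the ratio f(s+ih)/f(s) when f(s+h) = g(s) f(s).\<close>
definition path_ratio :: "(real \<Rightarrow> real) \<Rightarrow> real \<Rightarrow> real \<Rightarrow> int \<Rightarrow> real" where
  "path_ratio g h s i =
     (if 0 \<le> i then (\<Prod>k<nat i. g (s + real k * h))
      else (\<Prod>k\<in>{1..nat (- i)}. inverse (g (s - real k * h))))"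

text \<open>The expression of S phi / phi in terms of u and its shifts:
  T_x^i T_t^j phi / phi = (T_x^i phi / phi) * (T_t^j T_x^i phi / T_x^i phi),
  with T_x phi / phi = 1 + dx u and T_t phi / phi = 1 + dt v.\<close>
definition ratio_expr :: "real \<Rightarrow> real \<Rightarrow> (int \<times> int) set \<Rightarrow> (int \<times> int \<Rightarrow> real \<Rightarrow> real \<Rightarrow> real)
     \<Rightarrow> (real \<Rightarrow> real \<Rightarrow> real) \<Rightarrow> real \<Rightarrow> real \<Rightarrow> real" where
  "ratio_expr dx dt F c u x t =
     (\<Sum>(i, j)\<in>F. c (i, j) x t *
        (path_ratio (\<lambda>y. 1 + dx * u y t) dx x i *
         path_ratio (\<lambda>s. 1 + dt * burgers_v dx u (x + of_int i * dx) s) dt t j))"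

definition burgers_flow :: "real \<Rightarrow> real \<Rightarrow> (int \<times> int) set \<Rightarrow> (int \<times> int \<Rightarrow> real \<Rightarrow> real \<Rightarrow> real)
     \<Rightarrow> (real \<Rightarrow> real \<Rightarrow> real) \<Rightarrow> real \<Rightarrow> real \<Rightarrow> real" where
  "burgers_flow dx dt F c u x t = (1 + dx * u x t) * Dx dx (ratio_expr dx dt F c u) x t"

text \<open>Infinitesimal symmetry: the evolution w_lambda = Q[w] is compatible with the
  equation E[w] = 0 on the domain D: for every solution w in D, the linearisation
  of E at w in direction Q[w] vanishes at every lattice point.\<close>
definition is_symmetry ::
  "((real \<Rightarrow> real \<Rightarrow> real) \<Rightarrow> bool)
   \<Rightarrow> ((real \<Rightarrow> real \<Rightarrow> real) \<Rightarrow> real \<Rightarrow> real \<Rightarrow> real)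
   \<Rightarrow> ((real \<Rightarrow> real \<Rightarrow> real) \<Rightarrow> real \<Rightarrow> real \<Rightarrow> real) \<Rightarrow> bool" where
  "is_symmetry D E Q \<longleftrightarrow>
     (\<forall>w. D w \<and> (\<forall>x t. E w x t = 0) \<longrightarrow>
        (\<forall>x t. ((\<lambda>\<epsilon>. E (\<lambda>y s. w y s + \<epsilon> * Q w y s) x t) has_real_derivative 0) (at 0)))"

end

theory Submission
  imports Defs
begin


lemma pr_zero: "path_ratio g h s 0 = 1"
  by (simp add: path_ratio_def)

lemma pr_step:
  assumes "g (s + of_int i * h) \<noteq> 0"
  shows "path_ratio g h s (i + 1) = g (s + of_int i * h) * path_ratio g h s i"
proof (cases "0 \<le> i")
  case True
  then have "nat (i+1) = Suc (nat i)" by simp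
  moreover have "real (nat i) = of_int i" using True by simp
  ultimately show ?thesis using True by (simp add: path_ratio_def mult.commute)
next
  case False
  define k where "k = nat (- i)"
  have k1: "k \<ge> 1" and ik: "i = - int k" using False by (auto simp: k_def)
  show ?thesis
  proof (cases "k = 1")
    case True
    then show ?thesis using ik assms by (simp add: path_ratio_def)
  next
    case False
    then have "k \<ge> 2" using k1 by simp
    then have nn: "nat (- (i + 1)) = k - 1" "nat (-i) = k" using ik by auto
    have eqk: "{1..k} = insert k {1..k-1}" using k1 by auto
    have "(\<Prod>j\<in>{1..k}. inverse (g (s - real j * h))) =
        inverse (g (s - real k * h)) * (\<Prod>j\<in>{1..k-1}. inverse (g (s - real j * h)))"
      unfolding eqk by (subst prod.insert) (use k1 in auto)
    moreover have sk: "s - real k * h = s + of_int i * h" using ik by simp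
    ultimately have P: "(\<Prod>j\<in>{1..k}. inverse (g (s - real j * h))) =
        inverse (g (s + of_int i * h)) * (\<Prod>j\<in>{1..k-1}. inverse (g (s - real j * h)))"
      by simp
    have L: "path_ratio g h s (i+1) = (\<Prod>j\<in>{1..k-1}. inverse (g (s - real j * h)))"
      using nn \<open>k \<ge> 2\<close> ik unfolding path_ratio_def by simp
    have R: "path_ratio g h s i = (\<Prod>j\<in>{1..k}. inverse (g (s - real j * h)))"
      using nn k1 ik unfolding path_ratio_def by simp
    show ?thesis unfolding L R P using assms by simp
  qed
qed

lemma pr_nonzero: assumes "\<And>y. g y \<noteq> 0" shows "path_ratio g h s i \<noteq> 0"
  using assms by (simp add: path_ratio_def)

lemma pr_ratio:
  assumes nz: "\<And>y. f y \<noteq> 0" and g: "\<And>y. g y = f (y + h) / f y"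
  shows "path_ratio g h s i = f (s + of_int i * h) / f s"
proof (induction i rule: int_induct[where k=0])
  case base
  then show ?case using nz by (simp add: pr_zero)
next
  case (step1 i)
  have "path_ratio g h s (i + 1) = g (s + of_int i * h) * path_ratio g h s i"
    by (rule pr_step) (simp add: g nz)
  also have "\<dots> = f (s + of_int (i+1) * h) / f s"
    unfolding step1(2) using nz by (simp add: g algebra_simps)
  finally show ?case .
next
  case (step2 i)
  have gnz: "g (s + of_int (i-1) * h) \<noteq> 0" by (simp add: g nz)
  have "path_ratio g h s (i - 1 + 1) = g (s + of_int (i-1) * h) * path_ratio g h s (i-1)"
    by (rule pr_step) (fact gnz)
  then have "path_ratio g h s (i-1) = path_ratio g h s i / g (s + of_int (i-1) * h)"
    using gnz by (simp add: field_simps)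
  also have "\<dots> = f (s + of_int (i-1) * h) / f s"
    unfolding step2(2) using nz by (simp add: g algebra_simps)
  finally show ?case .
qed



lemma alg:
  fixes a0 a1 a2 a3 b0 b1 b2 b3 dx dt :: real
  assumes nz: "a0 \<noteq> 0" "a1 \<noteq> 0" "a2 \<noteq> 0" "a3 \<noteq> 0" "dx \<noteq> 0" "dt \<noteq> 0"
  assumes p0_def: "p0 = a0 + dt * (((a2 - a1)/dx - (a1 - a0)/dx)/dx)"
      and p1_def: "p1 = a1 + dt * (((a3 - a2)/dx - (a2 - a1)/dx)/dx)"
      and q0_def: "q0 = b0 + dt * (((b2 - b1)/dx - (b1 - b0)/dx)/dx)"
      and q1_def: "q1 = b1 + dt * (((b3 - b2)/dx - (b2 - b1)/dx)/dx)"
  assumes pnz: "p0 \<noteq> 0" "p1 \<noteq> 0"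
  assumes U0_def: "U0 = (a1 - a0)/dx/a0" and U1_def: "U1 = (a2 - a1)/dx/a1" and U2_def: "U2 = (a3 - a2)/dx/a2"
      and W_def: "W = (p1 - p0)/dx/p0"
      and Q0_def: "Q0 = (1 + dx*U0) * ((b1/a1 - b0/a0)/dx)"
      and Q1_def: "Q1 = (1 + dx*U1) * ((b2/a2 - b1/a1)/dx)"
      and Q2_def: "Q2 = (1 + dx*U2) * ((b3/a3 - b2/a2)/dx)"
      and Qw_def: "Qw = (1 + dx*W) * ((q1/p1 - q0/p0)/dx)"
  assumes V0_def: "V0 = (U1-U0)/dx + U0*U1" and V1_def: "V1 = (U2-U1)/dx + U1*U2"
      and V0p_def: "V0' = (Q1-Q0)/dx + Q0*U1 + U0*Q1" and V1p_def: "V1' = (Q2-Q1)/dx + Q1*U2 + U1*Q2"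
  shows "(Qw - Q0)/dt - (dx*Q0 * ((V1-V0)/dx) / (1 + dt*V0) + (1+dx*U0) *
      ((V1'-V0')/dx / (1 + dt*V0) - (V1-V0)/dx * (dt*V0') / (1 + dt*V0)^2)) = 0"
proof -
  have e1: "1 + dx*U0 = a1/a0" using nz by (simp add: U0_def field_simps)
  have e2: "1 + dx*U1 = a2/a1" using nz by (simp add: U1_def field_simps)
  have e3: "1 + dx*U2 = a3/a2" using nz by (simp add: U2_def field_simps)
  have e4: "1 + dx*W = p1/p0" using nz pnz by (simp add: W_def field_simps)
  have c0: "1 + dt*V0 = p0/a0" using nz by (simp add: V0_def U0_def U1_def p0_def field_simps)
  have c1: "1 + dt*V1 = p1/a1" using nz by (simp add: V1_def U2_def U1_def p1_def field_simps)
  have hQ0: "Q0 = a1/a0*(b1/a1-b0/a0)/dx" unfolding Q0_def e1 by simp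
  have hQw: "Qw = p1/p0*(q1/p1-q0/p0)/dx" unfolding Qw_def e4 by simp
  have hV0: "V0 = (p0/a0 - 1)/dt" using c0 nz by (simp add: field_simps)
  have hV1: "V1 = (p1/a1 - 1)/dt" using c1 nz by (simp add: field_simps)
  have hV0': "V0' = (q0 - p0*b0/a0)/a0/dt"
    unfolding V0p_def Q0_def Q1_def e1 e2 using nz pnz
    by (simp add: U0_def U1_def p0_def q0_def field_simps)
  have hV1': "V1' = (q1 - p1*b1/a1)/a1/dt"
    unfolding V1p_def Q1_def Q2_def e2 e3 using nz pnz
    by (simp add: U2_def U1_def p1_def q1_def field_simps)
  show ?thesis
    unfolding hQ0 hQw hV0 hV1 hV0' hV1' e1 c0
    using nz pnz apply (simp add: field_simps) by algebra
qed

lemma compat_alg: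
  fixes U W V0 V1 dx dt :: real
  assumes e: "(W-U)/dt - (1+dx*U)/(1+dt*V0) * ((V1-V0)/dx) = 0" and nz: "1+dt*V0 \<noteq> 0" "dx \<noteq> 0" "dt \<noteq> 0"
  shows "(1+dx*W)*(1+dt*V0) = (1+dt*V1)*(1+dx*U)"
proof -
  have "(W-U)/dt = (1+dx*U)/(1+dt*V0) * ((V1-V0)/dx)" using e by simp
  then have "(W - U) * ((1 + dt * V0) * dx) = (V1 - V0) * ((1 + dx * U) * dt)"
    using nz by (simp add: divide_eq_eq eq_divide_eq)
  then show ?thesis by algebra
qed

definition Eb :: "real \<Rightarrow> real \<Rightarrow> real \<Rightarrow> real \<Rightarrow> real \<Rightarrow> real \<Rightarrow> real" where
  "Eb dx dt U0 U1 U2 W = (W - U0)/dt - (1 + dx*U0)/(1 + dt*((U1-U0)/dx + U0*U1)) *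
     ((((U2-U1)/dx + U1*U2) - ((U1-U0)/dx + U0*U1))/dx)"

lemma burgers_Eb: "burgers dx dt w x t = Eb dx dt (w x t) (w (x+dx) t) (w (x+dx+dx) t) (w x (t+dt))"
  by (simp add: burgers_def Eb_def burgers_v_def Dx_def Dt_def)

lemma Eb_deriv:
  fixes U0 U1 U2 W Q0 Q1 Q2 Qw dx dt :: real
  assumes V0: "V0 = (U1-U0)/dx + U0*U1" and V1: "V1 = (U2-U1)/dx + U1*U2"
      and V0': "V0' = (Q1-Q0)/dx + Q0*U1 + U0*Q1" and V1': "V1' = (Q2-Q1)/dx + Q1*U2 + U1*Q2"
  assumes C: "1 + dt*V0 \<noteq> 0" and nz: "dx \<noteq> 0" "dt \<noteq> 0"
  shows "((\<lambda>e. Eb dx dt (U0+e*Q0) (U1+e*Q1) (U2+e*Q2) (W+e*Qw)) has_real_derivative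
    ((Qw - Q0)/dt - (dx*Q0 * ((V1-V0)/dx) / (1 + dt*V0) + (1+dx*U0) *
      ((V1'-V0')/dx / (1 + dt*V0) - (V1-V0)/dx * (dt*V0') / (1 + dt*V0)^2)))) (at 0)"
proof -
  define K where "K = 1 + dt*V0"
  have K: "K \<noteq> 0" using C by (simp add: K_def)
  define Vf where "Vf = (\<lambda>e. (U1+e*Q1 - (U0+e*Q0))/dx + (U0+e*Q0)*(U1+e*Q1))"
  define V1f where "V1f = (\<lambda>e. (U2+e*Q2 - (U1+e*Q1))/dx + (U1+e*Q1)*(U2+e*Q2))"
  define Cf where "Cf = (\<lambda>e. 1 + dt * Vf e)"
  have dV0: "(Vf has_real_derivative V0') (at 0)" unfolding Vf_def
    apply (rule derivative_eq_intros refl | simp add: nz)+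
    using nz by (simp add: V0' field_simps)
  have dV1: "(V1f has_real_derivative V1') (at 0)" unfolding V1f_def
    apply (rule derivative_eq_intros refl | simp add: nz)+
    using nz by (simp add: V1' field_simps)
  have dC: "(Cf has_real_derivative dt * V0') (at 0)" unfolding Cf_def
    by (rule derivative_eq_intros dV0 refl)+ simp
  have Vf0: "Vf 0 = V0" and V1f0: "V1f 0 = V1" by (simp_all add: Vf_def V1f_def V0 V1)
  have Cf0: "Cf 0 = K" by (simp add: Cf_def Vf0 K_def)
  have feq: "(\<lambda>e. Eb dx dt (U0+e*Q0) (U1+e*Q1) (U2+e*Q2) (W+e*Qw)) =
     (\<lambda>e. (W+e*Qw - (U0+e*Q0))/dt - (1 + dx*(U0+e*Q0))/(Cf e) * ((V1f e - Vf e)/dx))"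
    by (simp add: Eb_def Vf_def V1f_def Cf_def)
  have "((\<lambda>e. (W+e*Qw - (U0+e*Q0))/dt - (1 + dx*(U0+e*Q0))/(Cf e) * ((V1f e - Vf e)/dx))
     has_real_derivative
    ((Qw - Q0)/dt - (dx*Q0 * ((V1-V0)/dx) / K + (1+dx*U0) *
      ((V1'-V0')/dx / K - (V1-V0)/dx * (dt*V0') / K^2)))) (at 0)"
    apply (rule derivative_eq_intros dV0 dV1 dC refl | simp only: Vf0 V1f0 Cf0 | simp add: K nz)+
    using K nz by (simp add: field_simps) (simp add: power2_eq_square algebra_simps)
  then show ?thesis unfolding feq K_def .
qed
lemma Eb_deriv0:
  fixes a0 a1 a2 a3 b0 b1 b2 b3 dx dt :: real
  assumes nz: "a0 \<noteq> 0" "a1 \<noteq> 0" "a2 \<noteq> 0" "a3 \<noteq> 0" "dx \<noteq> 0" "dt \<noteq> 0"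
  assumes p0_def: "p0 = a0 + dt * (((a2 - a1)/dx - (a1 - a0)/dx)/dx)"
      and p1_def: "p1 = a1 + dt * (((a3 - a2)/dx - (a2 - a1)/dx)/dx)"
      and q0_def: "q0 = b0 + dt * (((b2 - b1)/dx - (b1 - b0)/dx)/dx)"
      and q1_def: "q1 = b1 + dt * (((b3 - b2)/dx - (b2 - b1)/dx)/dx)"
  assumes pnz: "p0 \<noteq> 0" "p1 \<noteq> 0"
  assumes U0_def: "U0 = (a1 - a0)/dx/a0" and U1_def: "U1 = (a2 - a1)/dx/a1" and U2_def: "U2 = (a3 - a2)/dx/a2"
      and W_def: "W = (p1 - p0)/dx/p0"
      and Q0_def: "Q0 = (1 + dx*U0) * ((b1/a1 - b0/a0)/dx)"
      and Q1_def: "Q1 = (1 + dx*U1) * ((b2/a2 - b1/a1)/dx)"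
      and Q2_def: "Q2 = (1 + dx*U2) * ((b3/a3 - b2/a2)/dx)"
      and Qw_def: "Qw = (1 + dx*W) * ((q1/p1 - q0/p0)/dx)"
  shows "((\<lambda>e. Eb dx dt (U0+e*Q0) (U1+e*Q1) (U2+e*Q2) (W+e*Qw)) has_real_derivative 0) (at 0)"
proof -
  define V0 where "V0 = (U1-U0)/dx + U0*U1"
  have c0: "1 + dt*V0 = p0/a0" using nz by (simp add: V0_def U0_def U1_def p0_def field_simps)
  have C: "1 + dt*V0 \<noteq> 0" unfolding c0 using nz pnz by simp
  have D: "((\<lambda>e. Eb dx dt (U0+e*Q0) (U1+e*Q1) (U2+e*Q2) (W+e*Qw)) has_real_derivative
    ((Qw - Q0)/dt - (dx*Q0 * ((((U2-U1)/dx + U1*U2)-V0)/dx) / (1 + dt*V0) + (1+dx*U0) *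
      ((((Q2-Q1)/dx + Q1*U2 + U1*Q2)-((Q1-Q0)/dx + Q0*U1 + U0*Q1))/dx / (1 + dt*V0) -
       (((U2-U1)/dx + U1*U2)-V0)/dx * (dt*((Q1-Q0)/dx + Q0*U1 + U0*Q1)) / (1 + dt*V0)^2)))) (at 0)"
    by (rule Eb_deriv[OF V0_def refl refl refl C nz(5,6)])
  have Z: "(Qw - Q0)/dt - (dx*Q0 * ((((U2-U1)/dx + U1*U2)-V0)/dx) / (1 + dt*V0) + (1+dx*U0) *
      ((((Q2-Q1)/dx + Q1*U2 + U1*Q2)-((Q1-Q0)/dx + Q0*U1 + U0*Q1))/dx / (1 + dt*V0) -
       (((U2-U1)/dx + U1*U2)-V0)/dx * (dt*((Q1-Q0)/dx + Q0*U1 + U0*Q1)) / (1 + dt*V0)^2)) = 0"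
    by (rule alg[OF nz p0_def p1_def q0_def q1_def pnz U0_def U1_def U2_def W_def Q0_def Q1_def Q2_def Qw_def V0_def refl refl refl])
  show ?thesis using D unfolding Z .
qed

lemma heat_unf: "heat dx dt \<phi> x t = (\<phi> x (t+dt) - \<phi> x t)/dt -
   ((\<phi> (x+dx+dx) t - \<phi> (x+dx) t)/dx - (\<phi> (x+dx) t - \<phi> x t)/dx)/dx"
  by (simp add: heat_def Dt_def Dx_def)

lemma heat_lin: "heat dx dt (\<lambda>y s. f y s + e * g y s) x t = heat dx dt f x t + e * heat dx dt g x t"
  unfolding heat_unf by (simp add: diff_divide_distrib add_divide_distrib algebra_simps)

lemma heat_step: assumes "heat dx dt \<phi> x t = 0" "dt \<noteq> 0"
  shows "\<phi> x (t+dt) = \<phi> x t + dt * (((\<phi> (x+dx+dx) t - \<phi> (x+dx) t)/dx - (\<phi> (x+dx) t - \<phi> x t)/dx)/dx)"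
  using assms unfolding heat_unf by (simp add: field_simps)

lemma ch_x: assumes "dx \<noteq> 0" "\<phi> y s \<noteq> 0"
  shows "1 + dx * cole_hopf dx \<phi> y s = \<phi> (y+dx) s / \<phi> y s"
  using assms by (simp add: cole_hopf_def Dx_def field_simps)

lemma ch_t: assumes "dx \<noteq> 0" "dt \<noteq> 0" "\<phi> y s \<noteq> 0" "\<phi> (y+dx) s \<noteq> 0" "heat dx dt \<phi> y s = 0"
  shows "1 + dt * burgers_v dx (cole_hopf dx \<phi>) y s = \<phi> y (s+dt) / \<phi> y s"
proof -
  have heq: "\<phi> y (s+dt) = \<phi> y s + dt * (((\<phi> (y+dx+dx) s - \<phi> (y+dx) s)/dx - (\<phi> (y+dx) s - \<phi> y s)/dx)/dx)"
    using heat_step assms by blast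
  show ?thesis unfolding heq using assms
    by (simp add: burgers_v_def cole_hopf_def Dx_def field_simps)
qed

lemma part1:
  assumes nz: "dx \<noteq> 0" "dt \<noteq> 0" and heat: "\<And>x t. heat dx dt \<phi> x t = 0" and pnz: "\<And>x t. \<phi> x t \<noteq> 0"
  shows "lin_op dx dt F c \<phi> x t / \<phi> x t = ratio_expr dx dt F c (cole_hopf dx \<phi>) x t"
proof -
  have r1: "path_ratio (\<lambda>y. 1 + dx * cole_hopf dx \<phi> y t) dx x i = \<phi> (x + of_int i * dx) t / \<phi> x t" for i
    by (rule pr_ratio[where f = "\<lambda>y. \<phi> y t"]) (simp_all add: pnz ch_x nz)
  have r2: "path_ratio (\<lambda>s. 1 + dt * burgers_v dx (cole_hopf dx \<phi>) y s) dt t j = \<phi> y (t + of_int j * dt) / \<phi> y t" for y j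
    by (rule pr_ratio[where f = "\<lambda>s. \<phi> y s"]) (simp_all add: pnz ch_t nz heat)
  have "lin_op dx dt F c \<phi> x t / \<phi> x t =
     (\<Sum>(i, j)\<in>F. c (i, j) x t * \<phi> (x + of_int i * dx) (t + of_int j * dt) / \<phi> x t)"
    unfolding lin_op_def sum_divide_distrib by (simp add: case_prod_beta)
  also have "\<dots> = ratio_expr dx dt F c (cole_hopf dx \<phi>) x t"
    unfolding ratio_expr_def r1 r2
    by (rule sum.cong) (auto simp: pnz)
  finally show ?thesis .
qed

lemma heat_sym:
  assumes nz: "dx \<noteq> 0" "dt \<noteq> 0"
    and sym: "is_symmetry (\<lambda>_. True) (heat dx dt) (lin_op dx dt F c)"
    and heat: "\<And>x t. heat dx dt \<phi> x t = 0"
  shows "heat dx dt (lin_op dx dt F c \<phi>) x t = 0"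
proof -
  let ?\<psi> = "lin_op dx dt F c \<phi>"
  have d: "((\<lambda>\<epsilon>. heat dx dt (\<lambda>y s. \<phi> y s + \<epsilon> * ?\<psi> y s) x t) has_real_derivative 0) (at 0)"
    using sym heat unfolding is_symmetry_def by blast
  have eq: "(\<lambda>\<epsilon>. heat dx dt (\<lambda>y s. \<phi> y s + \<epsilon> * ?\<psi> y s) x t) =
      (\<lambda>\<epsilon>. heat dx dt \<phi> x t + \<epsilon> * heat dx dt ?\<psi> x t)"
    by (intro ext) (rule heat_lin)
  have d2: "((\<lambda>\<epsilon>. heat dx dt \<phi> x t + \<epsilon> * heat dx dt ?\<psi> x t) has_real_derivative heat dx dt ?\<psi> x t) (at 0)"
    by (rule derivative_eq_intros refl)+ simp
  show ?thesis using DERIV_unique[OF d[unfolded eq] d2] by simp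
qed

lemma compat:
  assumes "burgers dx dt u y s = 0" "1 + dt * burgers_v dx u y s \<noteq> 0" "dx \<noteq> 0" "dt \<noteq> 0"
  shows "(1 + dx * u y (s+dt)) * (1 + dt * burgers_v dx u y s) =
         (1 + dt * burgers_v dx u (y+dx) s) * (1 + dx * u y s)"
proof -
  have "(u y (s+dt) - u y s)/dt - (1 + dx * u y s)/(1 + dt * burgers_v dx u y s) *
     ((burgers_v dx u (y+dx) s - burgers_v dx u y s)/dx) = 0"
    using assms(1) by (simp add: burgers_def Dt_def Dx_def)
  from compat_alg[OF this assms(2-4)] show ?thesis .
qed

lemma construct:
  assumes nz: "dx \<noteq> 0" "dt \<noteq> 0" and dom: "burgers_dom dx dt u" and sol: "\<And>x t. burgers dx dt u x t = 0"
  shows "\<exists>\<phi>. (\<forall>y s. \<phi> y s \<noteq> 0) \<and> (\<forall>y s. \<phi> (y+dx) s = (1 + dx * u y s) * \<phi> y s)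
            \<and> (\<forall>y s. \<phi> y (s+dt) = (1 + dt * burgers_v dx u y s) * \<phi> y s)"
proof -
  let ?v = "burgers_v dx u"
  have gx: "1 + dx * u y s \<noteq> 0" and gt: "1 + dt * ?v y s \<noteq> 0" for y s
    using dom by (auto simp: burgers_dom_def)
  have cp: "(1 + dx * u y (s+dt)) * (1 + dt * ?v y s) = (1 + dt * ?v (y+dx) s) * (1 + dx * u y s)" for y s
    using compat[OF sol gt nz] .
  define Pt where "Pt = (\<lambda>y s0 n. path_ratio (\<lambda>s'. 1 + dt * ?v y s') dt s0 n)"
  define Px where "Px = (\<lambda>s0 y0 m. path_ratio (\<lambda>y'. 1 + dx * u y' s0) dx y0 m)"
  have comm: "Pt (y+dx) s0 n * (1 + dx * u y s0) = (1 + dx * u y (s0 + of_int n * dt)) * Pt y s0 n" for y s0 n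
  proof (induction n rule: int_induct[where k=0])
    case base
    then show ?case by (simp add: Pt_def pr_zero)
  next
    case (step1 i)
    have "Pt (y+dx) s0 (i+1) * (1 + dx * u y s0) = (1 + dt * ?v (y+dx) (s0 + of_int i * dt)) * (Pt (y+dx) s0 i * (1 + dx * u y s0))"
      unfolding Pt_def by (subst pr_step) (simp_all add: gt)
    also have "\<dots> = (1 + dt * ?v (y+dx) (s0 + of_int i * dt)) * (1 + dx * u y (s0 + of_int i * dt)) * Pt y s0 i"
      using step1(2) by simp
    also have "\<dots> = (1 + dx * u y (s0 + of_int i * dt + dt)) * ((1 + dt * ?v y (s0 + of_int i * dt)) * Pt y s0 i)"
      using cp[of y "s0 + of_int i * dt"] by simp
    also have "\<dots> = (1 + dx * u y (s0 + of_int (i+1) * dt)) * Pt y s0 (i+1)"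
    proof -
      have si: "s0 + of_int (i+1) * dt = s0 + of_int i * dt + dt" by (simp add: algebra_simps)
      show ?thesis unfolding Pt_def si by (subst pr_step) (simp_all only: gt not_False_eq_True)
    qed
    finally show ?case .
  next
    case (step2 i)
    let ?s = "s0 + of_int (i-1) * dt"
    have e1: "Pt y s0 i = (1 + dt * ?v y ?s) * Pt y s0 (i-1)"
      unfolding Pt_def using pr_step[of "\<lambda>s'. 1 + dt * ?v y s'" s0 "i-1" dt] gt by simp
    have e2: "Pt (y+dx) s0 i = (1 + dt * ?v (y+dx) ?s) * Pt (y+dx) s0 (i-1)"
      unfolding Pt_def using pr_step[of "\<lambda>s'. 1 + dt * ?v (y+dx) s'" s0 "i-1" dt] gt by simp
    have si: "s0 + of_int i * dt = ?s + dt" by (simp add: algebra_simps)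
    have "(1 + dt * ?v (y+dx) ?s) * (Pt (y+dx) s0 (i-1) * (1 + dx * u y s0))
        = (1 + dx * u y (?s + dt)) * (1 + dt * ?v y ?s) * Pt y s0 (i-1)"
      using step2(2) unfolding e1 e2 si by (simp add: algebra_simps)
    also have "\<dots> = (1 + dt * ?v (y+dx) ?s) * ((1 + dx * u y ?s) * Pt y s0 (i-1))"
      using cp[of y ?s] by simp
    finally show ?case using gt[of "y+dx" ?s] by simp
  qed
  define \<phi> where "\<phi> = (\<lambda>y s. Px (s - of_int \<lfloor>s/dt\<rfloor> * dt) (y - of_int \<lfloor>y/dx\<rfloor> * dx) \<lfloor>y/dx\<rfloor>
                           * Pt y (s - of_int \<lfloor>s/dt\<rfloor> * dt) \<lfloor>s/dt\<rfloor>)"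
  have fl: "\<lfloor>(y + h)/h\<rfloor> = \<lfloor>y/h\<rfloor> + 1" if "h \<noteq> 0" for y h :: real
  proof -
    have "(y + h)/h = y/h + 1" using that by (simp add: field_simps)
    then show ?thesis by simp
  qed
  have P1: "\<forall>y s. \<phi> y s \<noteq> 0"
    unfolding \<phi>_def Px_def Pt_def by (auto intro!: pr_nonzero simp: gx gt)
  have P2: "\<forall>y s. \<phi> (y+dx) s = (1 + dx * u y s) * \<phi> y s"
  proof (intro allI)
    fix y s
    let ?m = "\<lfloor>y/dx\<rfloor>" and ?n = "\<lfloor>s/dt\<rfloor>"
    let ?y0 = "y - of_int ?m * dx" and ?s0 = "s - of_int ?n * dt"
    have m: "\<lfloor>(y+dx)/dx\<rfloor> = ?m + 1" using fl nz by simp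
    have y0: "y + dx - of_int (?m + 1) * dx = ?y0" by (simp add: algebra_simps)
    have "\<phi> (y+dx) s = Px ?s0 ?y0 (?m+1) * Pt (y+dx) ?s0 ?n"
      unfolding \<phi>_def m y0 ..
    also have "Px ?s0 ?y0 (?m+1) = (1 + dx * u y ?s0) * Px ?s0 ?y0 ?m"
      unfolding Px_def by (subst pr_step) (simp_all add: gx)
    finally have "\<phi> (y+dx) s = Px ?s0 ?y0 ?m * (Pt (y+dx) ?s0 ?n * (1 + dx * u y ?s0))"
      by simp
    also have "\<dots> = Px ?s0 ?y0 ?m * ((1 + dx * u y s) * Pt y ?s0 ?n)"
      unfolding comm by simp
    finally show "\<phi> (y+dx) s = (1 + dx * u y s) * \<phi> y s"
      unfolding \<phi>_def by simp
  qed
  have P3: "\<forall>y s. \<phi> y (s+dt) = (1 + dt * burgers_v dx u y s) * \<phi> y s"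
  proof (intro allI)
    fix y s
    let ?m = "\<lfloor>y/dx\<rfloor>" and ?n = "\<lfloor>s/dt\<rfloor>"
    let ?y0 = "y - of_int ?m * dx" and ?s0 = "s - of_int ?n * dt"
    have n: "\<lfloor>(s+dt)/dt\<rfloor> = ?n + 1" using fl nz by simp
    have s0: "s + dt - of_int (?n + 1) * dt = ?s0" by (simp add: algebra_simps)
    have "\<phi> y (s+dt) = Px ?s0 ?y0 ?m * Pt y ?s0 (?n+1)"
      unfolding \<phi>_def n s0 ..
    also have "Pt y ?s0 (?n+1) = (1 + dt * ?v y s) * Pt y ?s0 ?n"
      unfolding Pt_def by (subst pr_step) (simp_all add: gt)
    finally show "\<phi> y (s+dt) = (1 + dt * ?v y s) * \<phi> y s"
      unfolding \<phi>_def by simp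
  qed
  show ?thesis using P1 P2 P3 by blast
qed


theorem theorem5p4:
  fixes dx dt :: real and F :: "(int \<times> int) set" and c :: "int \<times> int \<Rightarrow> real \<Rightarrow> real \<Rightarrow> real"
  assumes "dx > 0" and "dt > 0" and "finite F"
    and "is_symmetry (\<lambda>_. True) (heat dx dt) (lin_op dx dt F c)"
  shows "(\<forall>\<phi>. (\<forall>x t. heat dx dt \<phi> x t = 0) \<and> (\<forall>x t. \<phi> x t \<noteq> 0) \<longrightarrow>
            (\<forall>x t. lin_op dx dt F c \<phi> x t / \<phi> x t = ratio_expr dx dt F c (cole_hopf dx \<phi>) x t))
       \<and> is_symmetry (burgers_dom dx dt) (burgers dx dt) (burgers_flow dx dt F c)"
proof
  have nz: "dx \<noteq> 0" "dt \<noteq> 0" using assms by auto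
  show "\<forall>\<phi>. (\<forall>x t. heat dx dt \<phi> x t = 0) \<and> (\<forall>x t. \<phi> x t \<noteq> 0) \<longrightarrow>
            (\<forall>x t. lin_op dx dt F c \<phi> x t / \<phi> x t = ratio_expr dx dt F c (cole_hopf dx \<phi>) x t)"
    using part1[OF nz] by blast
  show "is_symmetry (burgers_dom dx dt) (burgers dx dt) (burgers_flow dx dt F c)"
    unfolding is_symmetry_def
  proof (intro allI impI)
    fix w x t
    assume H: "burgers_dom dx dt w \<and> (\<forall>x t. burgers dx dt w x t = 0)"
    then have dom: "burgers_dom dx dt w" and sol: "\<And>x t. burgers dx dt w x t = 0" by auto
    from construct[OF nz dom sol] obtain \<phi> where pnz': "\<forall>y s. \<phi> y s \<noteq> 0"
      and px': "\<forall>y s. \<phi> (y+dx) s = (1 + dx * w y s) * \<phi> y s"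
      and pt': "\<forall>y s. \<phi> y (s+dt) = (1 + dt * burgers_v dx w y s) * \<phi> y s"
      by (elim exE conjE)
    have pnz: "\<phi> y s \<noteq> 0" and px: "\<phi> (y+dx) s = (1 + dx * w y s) * \<phi> y s"
      and pt: "\<phi> y (s+dt) = (1 + dt * burgers_v dx w y s) * \<phi> y s" for y s
      using pnz' px' pt' by blast+
    have chw: "cole_hopf dx \<phi> = w"
    proof (intro ext)
      fix y s
      show "cole_hopf dx \<phi> y s = w y s" unfolding cole_hopf_def Dx_def px
        using nz pnz[of y s] by (simp add: field_simps)
    qed
    have heatp: "heat dx dt \<phi> y s = 0" for y s
      unfolding heat_unf pt px burgers_v_def Dx_def using nz by (simp add: field_simps)
      
    define \<psi> where "\<psi> = lin_op dx dt F c \<phi>"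
    have heatq: "heat dx dt \<psi> y s = 0" for y s
      unfolding \<psi>_def by (rule heat_sym[OF nz assms(4) heatp])
    have R: "ratio_expr dx dt F c w = (\<lambda>y s. \<psi> y s / \<phi> y s)"
      using part1[OF nz heatp pnz] unfolding chw \<psi>_def by (intro ext) simp
    define Q where "Q = burgers_flow dx dt F c w"
    have Qeq: "Q y s = (1 + dx * w y s) * ((\<psi> (y+dx) s / \<phi> (y+dx) s - \<psi> y s / \<phi> y s)/dx)" for y s
      unfolding Q_def burgers_flow_def R Dx_def ..
    have weq: "w y s = (\<phi> (y+dx) s - \<phi> y s)/dx/\<phi> y s" for y s
      using chw[symmetric] by (simp add: cole_hopf_def Dx_def fun_eq_iff)
    have feq: "(\<lambda>\<epsilon>. burgers dx dt (\<lambda>y s. w y s + \<epsilon> * Q y s) x t) =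
      (\<lambda>\<epsilon>. Eb dx dt (w x t + \<epsilon> * Q x t) (w (x+dx) t + \<epsilon> * Q (x+dx) t)
          (w (x+dx+dx) t + \<epsilon> * Q (x+dx+dx) t) (w x (t+dt) + \<epsilon> * Q x (t+dt)))"
      by (simp add: burgers_Eb)
    define a0 where "a0 = \<phi> x t"
    define a1 where "a1 = \<phi> (x+dx) t"
    define a2 where "a2 = \<phi> (x+dx+dx) t"
    define a3 where "a3 = \<phi> (x+dx+dx+dx) t"
    define b0 where "b0 = \<psi> x t"
    define b1 where "b1 = \<psi> (x+dx) t"
    define b2 where "b2 = \<psi> (x+dx+dx) t"
    define b3 where "b3 = \<psi> (x+dx+dx+dx) t"
    define p0 where "p0 = \<phi> x (t+dt)"
    define p1 where "p1 = \<phi> (x+dx) (t+dt)"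
    define q0 where "q0 = \<psi> x (t+dt)"
    define q1 where "q1 = \<psi> (x+dx) (t+dt)"
    have fp0: "p0 = a0 + dt * (((a2 - a1)/dx - (a1 - a0)/dx)/dx)"
      unfolding p0_def a0_def a1_def a2_def by (rule heat_step[OF heatp nz(2)])
    have fp1: "p1 = a1 + dt * (((a3 - a2)/dx - (a2 - a1)/dx)/dx)"
      unfolding p1_def a3_def a1_def a2_def by (rule heat_step[OF heatp nz(2)])
    have fq0: "q0 = b0 + dt * (((b2 - b1)/dx - (b1 - b0)/dx)/dx)"
      unfolding q0_def b0_def b1_def b2_def by (rule heat_step[OF heatq nz(2)])
    have fq1: "q1 = b1 + dt * (((b3 - b2)/dx - (b2 - b1)/dx)/dx)"
      unfolding q1_def b3_def b1_def b2_def by (rule heat_step[OF heatq nz(2)])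
    have fU0: "w x t = (a1 - a0)/dx/a0" unfolding a0_def a1_def by (rule weq)
    have fU1: "w (x+dx) t = (a2 - a1)/dx/a1" unfolding a2_def a1_def by (rule weq)
    have fU2: "w (x+dx+dx) t = (a3 - a2)/dx/a2" unfolding a2_def a3_def by (rule weq)
    have fW: "w x (t+dt) = (p1 - p0)/dx/p0" unfolding p0_def p1_def by (rule weq)
    have fQ0: "Q x t = (1 + dx * w x t) * ((b1/a1 - b0/a0)/dx)"
      unfolding a0_def a1_def b0_def b1_def by (rule Qeq)
    have fQ1: "Q (x+dx) t = (1 + dx * w (x+dx) t) * ((b2/a2 - b1/a1)/dx)"
      unfolding a2_def a1_def b2_def b1_def by (rule Qeq)
    have fQ2: "Q (x+dx+dx) t = (1 + dx * w (x+dx+dx) t) * ((b3/a3 - b2/a2)/dx)"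
      unfolding a2_def a3_def b2_def b3_def by (rule Qeq)
    have fQw: "Q x (t+dt) = (1 + dx * w x (t+dt)) * ((q1/p1 - q0/p0)/dx)"
      unfolding p0_def p1_def q0_def q1_def by (rule Qeq)
    have "((\<lambda>\<epsilon>. Eb dx dt (w x t + \<epsilon> * Q x t) (w (x+dx) t + \<epsilon> * Q (x+dx) t)
          (w (x+dx+dx) t + \<epsilon> * Q (x+dx+dx) t) (w x (t+dt) + \<epsilon> * Q x (t+dt))) has_real_derivative 0) (at 0)"
      by (rule Eb_deriv0[OF pnz[of x t, folded a0_def] pnz[of "x+dx" t, folded a1_def]
           pnz[of "x+dx+dx" t, folded a2_def] pnz[of "x+dx+dx+dx" t, folded a3_def] nz fp0 fp1 fq0 fq1
           pnz[of x "t+dt", folded p0_def] pnz[of "x+dx" "t+dt", folded p1_def]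
           fU0 fU1 fU2 fW fQ0 fQ1 fQ2 fQw])
    then show "((\<lambda>\<epsilon>. burgers dx dt (\<lambda>y s. w y s + \<epsilon> * burgers_flow dx dt F c w y s) x t) has_real_derivative 0) (at 0)"
      unfolding Q_def[symmetric] feq .
  qed
qed

end
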